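(* Let $R$ be the set of $\phi\in V$ that are not cohomologous to any locally constant function, i.e. there is no locally constant $\varphi$ and continuous $\psi:\Sigma_{\mathbf A}^+\to\mathbb C$ with $\phi-\varphi=\psi\circ\sigma_{\mathbf A}-\psi$. Then $R$ is residual in $V$: there exist open dense subsets $V_1,V_2,\dots$ of $V$ with $\bigcap_{m}V_m\subset R$.
   Context: Let $N\ge2$, $\mathbf A$ an $N\times N$ zero-one aperiodic matrix, $\Sigma_{\mathbf A}^+=\{\omega\in\{1,\dots,N\}^{\mathbb N\cup\{0\}}:\mathbf A(\omega_m\omega_{m+1})=1\ \forall m\}$ with left shift $\sigma_{\mathbf A}$. $\mathrm{var}_m(\phi)=\sup\{|\phi(\omega)-\phi(\omega')|:\omega_k=\omega'_k,\ 0\le k\le m-1\}$; $V=\{\phi:\Sigma_{\mathbf A}^+\to\mathbb C:\mathrm{var}_m(\phi)^{1/m}\to0\}$ with the topology generated by the norms $\|\phi\|_\theta=\|\phi\|_\infty+[\phi]_\theta$, $\theta\in(0,1)$, $[\phi]_\theta$ the Lipschitz constant w.r.t. $d_\theta(\omega,\omega')=\theta^{\min\{m:\omega_m\ne\omega'_m\}}$. A function is locally constant if $\mathrm{var}_m$ of it vanishes for some $m$. *)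

theory Defs
  imports "HOL-Analysis.Analysis"
begin

type_synonym seq = "nat \<Rightarrow> nat"

definition zero_one_matrix :: "nat \<Rightarrow> (nat \<Rightarrow> nat \<Rightarrow> nat) \<Rightarrow> bool" where
  "zero_one_matrix N A \<longleftrightarrow> (\<forall>i\<in>{1..N}. \<forall>j\<in>{1..N}. A i j \<in> {0, 1})"

fun matpow :: "nat \<Rightarrow> (nat \<Rightarrow> nat \<Rightarrow> nat) \<Rightarrow> nat \<Rightarrow> nat \<Rightarrow> nat \<Rightarrow> nat" where
  "matpow N A 0 i j = (if i = j then 1 else 0)"
| "matpow N A (Suc n) i j = (\<Sum>k=1..N. matpow N A n i k * A k j)"

definition aperiodic :: "nat \<Rightarrow> (nat \<Rightarrow> nat \<Rightarrow> nat) \<Rightarrow> bool" where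
  "aperiodic N A \<longleftrightarrow> (\<exists>n>0. \<forall>i\<in>{1..N}. \<forall>j\<in>{1..N}. matpow N A n i j > 0)"

definition Sigma_A :: "nat \<Rightarrow> (nat \<Rightarrow> nat \<Rightarrow> nat) \<Rightarrow> seq set" where
  "Sigma_A N A = {\<omega>. (\<forall>m. \<omega> m \<in> {1..N}) \<and> (\<forall>m. A (\<omega> m) (\<omega> (Suc m)) = 1)}"

definition shift :: "seq \<Rightarrow> seq" where
  "shift \<omega> = (\<lambda>m. \<omega> (Suc m))"

definition var :: "nat \<Rightarrow> (nat \<Rightarrow> nat \<Rightarrow> nat) \<Rightarrow> nat \<Rightarrow> (seq \<Rightarrow> complex) \<Rightarrow> ereal" where
  "var N A m \<phi> = (SUP p \<in> {(\<omega>, \<omega>'). \<omega> \<in> Sigma_A N A \<and> \<omega>' \<in> Sigma_A N A \<and> (\<forall>k<m. \<omega> k = \<omega>' k)}.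
                     ereal (cmod (\<phi> (fst p) - \<phi> (snd p))))"

text \<open>The space V; functions are taken to vanish outside Sigma_A (extensional representation).\<close>
definition Vspace :: "nat \<Rightarrow> (nat \<Rightarrow> nat \<Rightarrow> nat) \<Rightarrow> (seq \<Rightarrow> complex) set" where
  "Vspace N A = {\<phi>. (\<forall>\<omega>. \<omega> \<notin> Sigma_A N A \<longrightarrow> \<phi> \<omega> = 0) \<and>
       (\<forall>\<^sub>F m in sequentially. var N A m \<phi> \<noteq> \<infinity>) \<and>
       ((\<lambda>m. real_of_ereal (var N A m \<phi>) powr (1 / real m)) \<longlonglongrightarrow> 0)}"

definition first_diff :: "seq \<Rightarrow> seq \<Rightarrow> nat" where
  "first_diff \<omega> \<omega>' = (LEAST m. \<omega> m \<noteq> \<omega>' m)"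

definition d_theta :: "real \<Rightarrow> seq \<Rightarrow> seq \<Rightarrow> real" where
  "d_theta \<theta> \<omega> \<omega>' = (if \<omega> = \<omega>' then 0 else \<theta> ^ first_diff \<omega> \<omega>')"

definition sup_norm :: "nat \<Rightarrow> (nat \<Rightarrow> nat \<Rightarrow> nat) \<Rightarrow> (seq \<Rightarrow> complex) \<Rightarrow> real" where
  "sup_norm N A \<phi> = (SUP \<omega> \<in> Sigma_A N A. cmod (\<phi> \<omega>))"

definition lip :: "nat \<Rightarrow> (nat \<Rightarrow> nat \<Rightarrow> nat) \<Rightarrow> real \<Rightarrow> (seq \<Rightarrow> complex) \<Rightarrow> real" where
  "lip N A \<theta> \<phi> = (SUP p \<in> {(\<omega>, \<omega>'). \<omega> \<in> Sigma_A N A \<and> \<omega>' \<in> Sigma_A N A \<and> \<omega> \<noteq> \<omega>'}.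
                     cmod (\<phi> (fst p) - \<phi> (snd p)) / d_theta \<theta> (fst p) (snd p))"

definition theta_norm :: "nat \<Rightarrow> (nat \<Rightarrow> nat \<Rightarrow> nat) \<Rightarrow> real \<Rightarrow> (seq \<Rightarrow> complex) \<Rightarrow> real" where
  "theta_norm N A \<theta> \<phi> = sup_norm N A \<phi> + lip N A \<theta> \<phi>"

definition V_open :: "nat \<Rightarrow> (nat \<Rightarrow> nat \<Rightarrow> nat) \<Rightarrow> (seq \<Rightarrow> complex) set \<Rightarrow> bool" where
  "V_open N A U \<longleftrightarrow> U \<subseteq> Vspace N A \<and>
     (\<forall>\<phi>\<in>U. \<exists>\<Theta> \<epsilon>. finite \<Theta> \<and> \<Theta> \<subseteq> {0<..<1} \<and> \<epsilon> > 0 \<and>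
        {\<psi> \<in> Vspace N A. \<forall>\<theta>\<in>\<Theta>. theta_norm N A \<theta> (\<psi> - \<phi>) < \<epsilon>} \<subseteq> U)"

definition V_topology :: "nat \<Rightarrow> (nat \<Rightarrow> nat \<Rightarrow> nat) \<Rightarrow> (seq \<Rightarrow> complex) topology" where
  "V_topology N A = topology (V_open N A)"

definition locally_constant :: "nat \<Rightarrow> (nat \<Rightarrow> nat \<Rightarrow> nat) \<Rightarrow> (seq \<Rightarrow> complex) \<Rightarrow> bool" where
  "locally_constant N A \<phi> \<longleftrightarrow> (\<exists>m. var N A m \<phi> = 0)"

text \<open>Continuity on Sigma_A (product topology = d_theta topology).\<close>
definition continuous_Sigma :: "nat \<Rightarrow> (nat \<Rightarrow> nat \<Rightarrow> nat) \<Rightarrow> (seq \<Rightarrow> complex) \<Rightarrow> bool" where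
  "continuous_Sigma N A \<psi> \<longleftrightarrow> (\<forall>\<omega>\<in>Sigma_A N A. \<forall>\<epsilon>>0. \<exists>n. \<forall>\<omega>'\<in>Sigma_A N A.
       (\<forall>k<n. \<omega> k = \<omega>' k) \<longrightarrow> cmod (\<psi> \<omega> - \<psi> \<omega>') < \<epsilon>)"

definition cohomologous_to_lc :: "nat \<Rightarrow> (nat \<Rightarrow> nat \<Rightarrow> nat) \<Rightarrow> (seq \<Rightarrow> complex) \<Rightarrow> bool" where
  "cohomologous_to_lc N A \<phi> \<longleftrightarrow> (\<exists>\<phi>0 \<psi>. locally_constant N A \<phi>0 \<and> continuous_Sigma N A \<psi> \<and>
       (\<forall>\<omega>\<in>Sigma_A N A. \<phi> \<omega> - \<phi>0 \<omega> = \<psi> (shift \<omega>) - \<psi> \<omega>))"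

definition Rset :: "nat \<Rightarrow> (nat \<Rightarrow> nat \<Rightarrow> nat) \<Rightarrow> (seq \<Rightarrow> complex) set" where
  "Rset N A = {\<phi> \<in> Vspace N A. \<not> cohomologous_to_lc N A \<phi>}"

end

theory Submission
  imports Defs
begin


definition path :: "nat \<Rightarrow> (nat \<Rightarrow> nat \<Rightarrow> nat) \<Rightarrow> nat \<Rightarrow> (nat \<Rightarrow> nat) \<Rightarrow> nat \<Rightarrow> nat \<Rightarrow> bool" where
  "path N A n p i j \<longleftrightarrow> p 0 = i \<and> p n = j \<and> (\<forall>t\<le>n. p t \<in> {1..N}) \<and> (\<forall>t<n. A (p t) (p (Suc t)) = 1)"

lemma matpow_path:
  assumes zo: "zero_one_matrix N A" and i: "i \<in> {1..N}"
  shows "j \<in> {1..N} \<Longrightarrow> matpow N A n i j > 0 \<Longrightarrow> \<exists>p. path N A n p i j"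
proof (induction n arbitrary: j)
  case 0
  then have "i = j" by (simp split: if_splits)
  then show ?case using i by (auto simp: path_def intro!: exI[of _ "\<lambda>_. i"])
next
  case (Suc n)
  have "\<exists>k\<in>{1..N}. matpow N A n i k * A k j > 0"
  proof (rule ccontr)
    assume "\<not> ?thesis"
    then have "(\<Sum>k=1..N. matpow N A n i k * A k j) = 0" by (intro sum.neutral) auto
    then have "matpow N A (Suc n) i j = 0" by simp
    with Suc.prems show False by simp
  qed
  then obtain k where k: "k \<in> {1..N}" "matpow N A n i k > 0" "A k j > 0" by auto
  have Akj: "A k j = 1" using zo k Suc.prems(1) unfolding zero_one_matrix_def by fastforce
  obtain p where p: "path N A n p i k" using Suc.IH[OF k(1) k(2)] by blast
  define p' where "p' = (\<lambda>t. if t \<le> n then p t else j)"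
  have "path N A (Suc n) p' i j"
    using p Akj Suc.prems(1) unfolding path_def p'_def
    by (auto simp: le_Suc_eq less_Suc_eq)
  then show ?case by blast
qed

lemma path_append:
  assumes p: "path N A n p i j" and q: "path N A m q j k"
  shows "path N A (n+m) (\<lambda>t. if t \<le> n then p t else q (t - n)) i k"
proof -
  define r where "r = (\<lambda>t. if t \<le> n then p t else q (t - n))"
  have r1: "r t = p t" if "t \<le> n" for t using that unfolding r_def by simp
  have r2: "r t = q (t - n)" if "t \<ge> n" for t
    using that p q unfolding r_def path_def by (cases "t = n") auto
  have a: "r 0 = i" using p r1 unfolding path_def by simp
  have b: "r (n+m) = k" using q r2[of "n+m"] unfolding path_def by simp
  have c: "r t \<in> {1..N}" if "t \<le> n+m" for t
  proof (cases "t \<le> n")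
    case True then show ?thesis using p r1 unfolding path_def by simp
  next
    case False then have "t - n \<le> m" using that by simp
    then show ?thesis using q r2[of t] False unfolding path_def by simp
  qed
  have d: "A (r t) (r (Suc t)) = 1" if "t < n+m" for t
  proof (cases "t < n")
    case True then show ?thesis using p r1[of t] r1[of "Suc t"] unfolding path_def by simp
  next
    case False
    then have e: "Suc t - n = Suc (t - n)" "t - n < m" using that by auto
    show ?thesis using q r2[of t] r2[of "Suc t"] False e unfolding path_def by simp
  qed
  show ?thesis using a b c d unfolding path_def r_def[symmetric] by blast
qed

lemma path_mult:
  assumes h: "\<forall>i\<in>{1..N}. \<forall>j\<in>{1..N}. \<exists>p. path N A n0 p i j"
  shows "i \<in> {1..N} \<Longrightarrow> j \<in> {1..N} \<Longrightarrow> \<exists>p. path N A (Suc q * n0) p i j"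
proof (induction q arbitrary: i)
  case 0 then show ?case using h by simp
next
  case (Suc q)
  obtain p where p: "path N A n0 p i i" using h Suc.prems by blast
  obtain p2 where p2: "path N A (Suc q * n0) p2 i j" using Suc.IH Suc.prems by blast
  have "Suc (Suc q) * n0 = n0 + Suc q * n0" by simp
  then show ?case using path_append[OF p p2] by metis
qed



definition blk :: "(nat \<Rightarrow> nat) \<Rightarrow> (nat \<Rightarrow> nat) \<Rightarrow> bool \<Rightarrow> nat \<Rightarrow> nat" where
  "blk c d b = (if b then d else c)"

definition sq :: "nat \<Rightarrow> (nat \<Rightarrow> nat) \<Rightarrow> (nat \<Rightarrow> nat) \<Rightarrow> bool list \<Rightarrow> seq" where
  "sq l c d W i = blk c d (W ! ((i div l) mod 9)) (i mod l)"

lemma L9: "{..<9::nat} = {0,1,2,3,4,5,6,7,8}"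
  by (simp add: lessThan_nat_numeral lessThan_Suc insert_commute)
lemma all9: "(\<forall>b<(9::nat). P b) \<longleftrightarrow> P 0 \<and> P 1 \<and> P 2 \<and> P 3 \<and> P 4 \<and> P 5 \<and> P 6 \<and> P 7 \<and> P 8"
proof -
  have "(\<forall>b<(9::nat). P b) \<longleftrightarrow> (\<forall>b\<in>{..<9::nat}. P b)" by auto
  also have "\<dots> \<longleftrightarrow> P 0 \<and> P 1 \<and> P 2 \<and> P 3 \<and> P 4 \<and> P 5 \<and> P 6 \<and> P 7 \<and> P 8" unfolding L9 by simp
  finally show ?thesis .
qed
definition "Yw = [False,False,False,True,False,False,False,False,True]"
definition "Xw = [False,False,False,False,False,False,True,False,True]"
definition "tau = [0,1,4,5,6,2,3,7,8::nat]"
lemma tau_facts1: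
  "\<forall>b<9. Xw!(b mod 9) = Yw!((tau!b) mod 9) \<and> Xw!((b+1) mod 9) = Yw!((tau!b+1) mod 9)"
  unfolding all9 by (simp add: Xw_def Yw_def tau_def)
lemma tau_facts2:
  "\<forall>r<9. \<not>(Yw!r = Yw!((r+1) mod 9) \<and> Yw!((r+1) mod 9) = Yw!((r+2) mod 9) \<and> Yw!((r+2) mod 9) = Yw!((r+3) mod 9) \<and> Yw!((r+3) mod 9) = Yw!((r+4) mod 9))"
  unfolding all9 by (simp add: Yw_def)
lemma tau_facts3: "inj_on (\<lambda>b. tau!b) {..<9}"
  unfolding L9 by (simp add: tau_def)
lemma tau_facts4: "\<forall>b<9. tau!b < 9"
  unfolding all9 by (simp add: tau_def)
lemma tau_facts5a: "\<forall>b<9. b < 6 \<longrightarrow> Xw!b = False"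
  unfolding all9 by (simp add: Xw_def)
lemma tau_facts5: "\<forall>b<6. Xw!b = False"
  using tau_facts5a by auto
lemmas tau_facts = tau_facts1 tau_facts2 tau_facts3 tau_facts4 tau_facts5

lemma blk_path:
  assumes "path N A l c 1 1" "path N A l d 1 1"
  shows "path N A l (blk c d b) 1 1"
  using assms by (simp add: blk_def)

lemma sq_Sigma:
  assumes pc: "path N A l c 1 1" and pd: "path N A l d 1 1" and l: "l > 0"
  shows "sq l c d W \<in> Sigma_A N A"
  unfolding Sigma_A_def
proof (intro CollectI conjI allI)
  fix i
  have p: "\<And>b. path N A l (blk c d b) 1 1" using blk_path[OF pc pd] .
  show "sq l c d W i \<in> {1..N}" unfolding sq_def using p[unfolded path_def] l
    by (meson less_imp_le_nat mod_less_divisor)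
  show "A (sq l c d W i) (sq l c d W (Suc i)) = 1"
  proof (cases "Suc (i mod l) = l")
    case True
    then have "Suc i mod l = 0" "Suc i div l = Suc (i div l)" by (simp_all add: mod_Suc div_Suc)
    then have "sq l c d W (Suc i) = 1" unfolding sq_def using p[unfolded path_def] by simp
    moreover have "A (sq l c d W i) 1 = 1" unfolding sq_def
      using p[unfolded path_def, of "W ! ((i div l) mod 9)"] True
      by (metis lessI)
    ultimately show ?thesis by simp
  next
    case False
    then have "Suc i mod l = Suc (i mod l)" "Suc i div l = i div l" by (simp_all add: mod_Suc div_Suc)
    then show ?thesis unfolding sq_def using p[unfolded path_def] l
      by (metis False Suc_lessI mod_less_divisor)
  qed
qed

lemma sq_period: "l > 0 \<Longrightarrow> sq l c d W (i + 9*l) = sq l c d W i"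
  unfolding sq_def by simp

lemma sq_at: "l > 0 \<Longrightarrow> r < l \<Longrightarrow> sq l c d W (b*l + r) = blk c d (W ! (b mod 9)) r"
  unfolding sq_def by simp

lemma sq_window:
  assumes l: "l > 0" and r: "r < 2*l"
  shows "sq l c d W (b*l + r) = (if r < l then blk c d (W ! (b mod 9)) r else blk c d (W ! ((b+1) mod 9)) (r - l))"
proof (cases "r < l")
  case True then show ?thesis using sq_at[OF l] by simp
next
  case False
  then have "b*l + r = (b+1)*l + (r - l)" by simp
  then show ?thesis using sq_at[OF l, of "r - l" c d W "b+1"] False r by simp
qed



definition sh :: "seq \<Rightarrow> nat \<Rightarrow> seq" where "sh x k = (\<lambda>i. x (k+i))"

definition test :: "nat \<Rightarrow> (nat \<Rightarrow> nat \<Rightarrow> nat) \<Rightarrow> nat \<Rightarrow> nat \<Rightarrow> seq \<Rightarrow> seq \<Rightarrow> (nat \<Rightarrow> nat) \<Rightarrow> bool" where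
  "test N A m n x y \<pi> \<longleftrightarrow> x \<in> Sigma_A N A \<and> y \<in> Sigma_A N A \<and> n > 0 \<and> (\<forall>i. x (i+n) = x i) \<and>
     (\<forall>i. y (i+n) = y i) \<and> bij_betw \<pi> {..<n} {..<n} \<and> (\<forall>k<n. \<forall>j<m. x (k+j) = y (\<pi> k + j))"

definition Dsum :: "nat \<Rightarrow> seq \<Rightarrow> seq \<Rightarrow> (seq \<Rightarrow> complex) \<Rightarrow> complex" where
  "Dsum n x y \<phi> = (\<Sum>k<n. \<phi> (sh x k)) - (\<Sum>k<n. \<phi> (sh y k))"

lemma blk_eq:
  assumes "\<forall>w<l. blk c d u w = blk c d v w" "o0 < l" "c o0 \<noteq> d o0"
  shows "u = v"
  using assms by (cases u; cases v; auto simp: blk_def)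

lemma div_mod_decomp: "(l::nat) > 0 \<Longrightarrow> w < l \<Longrightarrow> (b*l + w) div l = b \<and> (b*l + w) mod l = w"
  by (simp add: add.commute[of "b*l"])

lemma construction0:
  assumes pc: "path N A l c 1 1" and pd: "path N A l d 1 1" and l: "l > 0" "m \<le> l"
    and o0: "o0 < l" "c o0 \<noteq> d o0"
  shows "\<exists>n x y \<pi> g K. test N A m n x y \<pi> \<and> (\<forall>\<omega>. g \<omega> \<in> {0,1}) \<and>
     (\<forall>\<omega>. \<omega> \<notin> Sigma_A N A \<longrightarrow> g \<omega> = 0) \<and>
     (\<forall>\<omega>\<in>Sigma_A N A. \<forall>\<omega>'\<in>Sigma_A N A. (\<forall>i<K. \<omega> i = \<omega>' i) \<longrightarrow> g \<omega> = g \<omega>') \<and>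
     Dsum n x y g \<noteq> 0"
proof -
  define x where "x = sq l c d Xw"
  define y where "y = sq l c d Yw"
  define \<pi> where "\<pi> = (\<lambda>k. tau!(k div l) * l + k mod l)"
  define gr where "gr = (\<lambda>\<omega>. if \<omega> \<in> Sigma_A N A \<and> (\<forall>i<5*l. \<omega> i = \<omega> (i+l)) then 1 else (0::real))"
  define g where "g = (\<lambda>\<omega>. complex_of_real (gr \<omega>))"
  have xS: "x \<in> Sigma_A N A" and yS: "y \<in> Sigma_A N A" unfolding x_def y_def using sq_Sigma[OF pc pd l(1)] by auto
  have per: "\<forall>i. x (i + 9*l) = x i" "\<forall>i. y (i + 9*l) = y i" unfolding x_def y_def using sq_period[OF l(1)] by auto
  have tb: "\<And>b. b < 9 \<Longrightarrow> tau!b < 9" using tau_facts(4) by auto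
  have inj: "inj_on \<pi> {..<9*l}"
  proof (rule inj_onI)
    fix k1 k2 assume k: "k1 \<in> {..<9*l}" "k2 \<in> {..<9*l}" and e: "\<pi> k1 = \<pi> k2"
    have m1: "k1 mod l < l" "k2 mod l < l" using l by auto
    from e have "tau!(k1 div l) = tau!(k2 div l) \<and> k1 mod l = k2 mod l"
      unfolding \<pi>_def by (metis div_mod_decomp[OF l(1)] m1)
    moreover have "k1 div l < 9" "k2 div l < 9" using k l by (auto simp: less_mult_imp_div_less)
    ultimately have "k1 div l = k2 div l" "k1 mod l = k2 mod l" using tau_facts(3) unfolding inj_on_def by auto
    then show "k1 = k2" by (metis div_mult_mod_eq)
  qed
  have img: "\<pi> ` {..<9*l} \<subseteq> {..<9*l}"
  proof
    fix z assume "z \<in> \<pi> ` {..<9*l}"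
    then obtain k where k: "k < 9*l" "z = \<pi> k" by auto
    have "k div l < 9" using k l by (auto simp: less_mult_imp_div_less)
    then have t: "tau!(k div l) + 1 \<le> 9" using tb by (metis Suc_eq_plus1 Suc_leI)
    have "z < (tau!(k div l) + 1) * l" using k l unfolding \<pi>_def by simp
    also have "\<dots> \<le> 9 * l" using t by (simp add: mult_le_mono1)
    finally show "z \<in> {..<9*l}" by simp
  qed
  have bij: "bij_betw \<pi> {..<9*l} {..<9*l}"
    unfolding bij_betw_def using inj img endo_inj_surj[OF _ img inj] by auto
  have win: "\<forall>k<9*l. \<forall>j<m. x (k+j) = y (\<pi> k + j)"
  proof (intro allI impI)
    fix k j assume k: "k < 9*l" and j: "j < m"
    define b where "b = k div l"
    define w where "w = k mod l"
    have b9: "b < 9" using k l unfolding b_def by (auto simp: less_mult_imp_div_less)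
    have ol: "w < l" using l unfolding w_def by auto
    have r: "w + j < 2*l" using ol j l by auto
    have e1: "k + j = b*l + (w+j)" unfolding b_def w_def by simp
    have e2: "\<pi> k + j = (tau!b)*l + (w+j)" unfolding \<pi>_def b_def w_def by simp
    have F: "Xw!(b mod 9) = Yw!((tau!b) mod 9) \<and> Xw!((b+1) mod 9) = Yw!((tau!b+1) mod 9)"
      using tau_facts(1) b9 by blast
    show "x (k+j) = y (\<pi> k + j)"
      unfolding e1 e2 x_def y_def sq_window[OF l(1) r] using F by simp
  qed
  have test: "test N A m (9*l) x y \<pi>"
    unfolding test_def using xS yS per bij win l by auto
  have g01: "\<forall>\<omega>. g \<omega> \<in> {0,1}" unfolding g_def gr_def by auto
  have g0: "\<forall>\<omega>. \<omega> \<notin> Sigma_A N A \<longrightarrow> g \<omega> = 0" unfolding g_def gr_def by auto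
  have gK: "\<forall>\<omega>\<in>Sigma_A N A. \<forall>\<omega>'\<in>Sigma_A N A. (\<forall>i<6*l. \<omega> i = \<omega>' i) \<longrightarrow> g \<omega> = g \<omega>'"
  proof (intro ballI impI)
    fix \<omega> \<omega>' assume "\<omega> \<in> Sigma_A N A" "\<omega>' \<in> Sigma_A N A" and a: "\<forall>i<6*l. \<omega> i = \<omega>' i"
    have "(\<forall>i<5*l. \<omega> i = \<omega> (i+l)) \<longleftrightarrow> (\<forall>i<5*l. \<omega>' i = \<omega>' (i+l))"
      using a by auto
    then show "g \<omega> = g \<omega>'" unfolding g_def gr_def using \<open>\<omega> \<in> _\<close> \<open>\<omega>' \<in> _\<close> by simp
  qed
  have gx: "gr (sh x 0) = 1"
  proof -
    have "\<forall>i<5*l. x i = x (i+l)"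
    proof (intro allI impI)
      fix i assume i: "i < 5*l"
      define b where "b = i div l"
      define w where "w = i mod l"
      have b5: "b < 5" using i l unfolding b_def by (auto simp: less_mult_imp_div_less)
      have ol: "w < l" using l unfolding w_def by auto
      have e1: "i = b*l + w" unfolding b_def w_def by simp
      have e2: "i + l = (b+1)*l + w" unfolding b_def w_def by simp
      have "Xw!b = False" "Xw!(b+1) = False" using tau_facts(5) b5 by auto
      moreover have "b mod 9 = b" "(b+1) mod 9 = b+1" using b5 by auto
      ultimately have "x ((b+1)*l + w) = x (b*l + w)"
        unfolding x_def sq_at[OF l(1) ol] by simp
      then show "x i = x (i+l)" using e1 e2 by (simp add: algebra_simps)
    qed
    moreover have "sh x 0 = x" unfolding sh_def by simp
    ultimately show ?thesis unfolding gr_def using xS by simp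
  qed
  have gy: "gr (sh y k) = 0" for k
  proof (rule ccontr)
    assume "gr (sh y k) \<noteq> 0"
    then have H: "\<forall>i<5*l. y (k+i) = y (k+i+l)" unfolding gr_def sh_def by (auto split: if_splits simp: add.assoc)
    define b where "b = k div l + 1"
    have eqs: "Yw!((b+j) mod 9) = Yw!((b+j+1) mod 9)" if j: "j < 4" for j
    proof -
      have "\<forall>w<l. blk c d (Yw ! ((b + j) mod 9)) w = blk c d (Yw ! ((b + j + 1) mod 9)) w"
      proof (intro allI impI)
        fix w assume ol: "w < l"
        have lo: "k < b*l" unfolding b_def using l
          by (metis add.commute div_mult_mod_eq mod_less_divisor mult_Suc nat_add_left_cancel_less plus_1_eq_Suc)
        have hi: "b*l \<le> k + l" unfolding b_def by (simp add: add.commute)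
        define i where "i = (b+j)*l + w - k"
        have ki: "k + i = (b+j)*l + w" unfolding i_def using lo by (simp add: add_mult_distrib)
        have jl: "j*l + w < 4*l"
        proof -
          have "j*l + w < (j+1)*l" using ol by simp
          also have "\<dots> \<le> 4*l" using j by (intro mult_le_mono1) simp
          finally show ?thesis .
        qed
        have "(b+j)*l + w < (b+4)*l" using jl by (simp add: add_mult_distrib)
        also have "\<dots> \<le> k + 5*l" using hi by (simp add: add_mult_distrib)
        finally have "i < 5*l" using ki by linarith
        then have A1: "y (k+i) = y (k+i+l)" using H by blast
        have A2: "k + i + l = (b+j+1)*l + w" using ki by simp
        have "y ((b+j)*l + w) = y ((b+j+1)*l + w)" using A1 A2 ki by metis
        then show "blk c d (Yw ! ((b + j) mod 9)) w = blk c d (Yw ! ((b + j + 1) mod 9)) w"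
          unfolding y_def sq_at[OF l(1) ol] .
      qed
      then show ?thesis using blk_eq o0 by blast
    qed
    define r where "r = b mod 9"
    have r9: "r < 9" unfolding r_def by simp
    have bm: "(b+j) mod 9 = (r+j) mod 9" for j unfolding r_def by (simp add: mod_add_left_eq)
    have e: "Yw!((r+j) mod 9) = Yw!((r+(j+1)) mod 9)" if "j<4" for j
      using eqs[OF that] bm[of j] bm[of "j+1"] by (simp add: add.assoc)
    have e0: "Yw!r = Yw!((r+1) mod 9)" using e[of 0] r9 by simp
    have e1: "Yw!((r+1) mod 9) = Yw!((r+2) mod 9)" using e[of 1] by simp
    have e2: "Yw!((r+2) mod 9) = Yw!((r+3) mod 9)" using e[of 2] by simp
    have e3: "Yw!((r+3) mod 9) = Yw!((r+4) mod 9)" using e[of 3] by simp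
    have "Yw!r = Yw!((r+1) mod 9) \<and> Yw!((r+1) mod 9) = Yw!((r+2) mod 9) \<and> Yw!((r+2) mod 9) = Yw!((r+3) mod 9) \<and> Yw!((r+3) mod 9) = Yw!((r+4) mod 9)"
      using e0 e1 e2 e3 by blast
    then show False using tau_facts(2) r9 by blast
  qed
  have "Dsum (9*l) x y g = complex_of_real (\<Sum>k<9*l. gr (sh x k))"
    unfolding Dsum_def g_def using gy by simp
  moreover have "(\<Sum>k<9*l. gr (sh x k)) \<ge> gr (sh x 0)"
    by (rule member_le_sum) (use l in \<open>auto simp: gr_def\<close>)
  moreover have "complex_of_real (\<Sum>k<9*l. gr (sh x k)) \<noteq> 0"
    using calculation(2) gx by (metis of_real_eq_0_iff not_one_le_zero)
  ultimately have "Dsum (9*l) x y g \<noteq> 0" by simp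
  then show ?thesis using test g01 g0 gK by blast
qed



lemma construction:
  assumes N: "N \<ge> 2" and zo: "zero_one_matrix N A" and ap: "aperiodic N A"
  shows "\<exists>n x y \<pi> g K. test N A m n x y \<pi> \<and> (\<forall>\<omega>. g \<omega> \<in> {0,1}) \<and>
     (\<forall>\<omega>. \<omega> \<notin> Sigma_A N A \<longrightarrow> g \<omega> = 0) \<and>
     (\<forall>\<omega>\<in>Sigma_A N A. \<forall>\<omega>'\<in>Sigma_A N A. (\<forall>i<K. \<omega> i = \<omega>' i) \<longrightarrow> g \<omega> = g \<omega>') \<and>
     Dsum n x y g \<noteq> 0"
proof -
  obtain n0 where n0: "n0 > 0" "\<forall>i\<in>{1..N}. \<forall>j\<in>{1..N}. matpow N A n0 i j > 0"
    using ap unfolding aperiodic_def by blast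
  have h: "\<forall>i\<in>{1..N}. \<forall>j\<in>{1..N}. \<exists>p. path N A n0 p i j"
    using n0(2) matpow_path[OF zo] by blast
  have one: "1 \<in> {1..N}" and two: "2 \<in> {1..N}" using N by auto
  obtain p1 where p1: "path N A n0 p1 1 1" using h one by blast
  obtain p2 where p2: "path N A n0 p2 1 2" using h one two by blast
  obtain q1 where q1: "path N A (Suc m * n0) q1 1 1" using path_mult[OF h one one] by blast
  obtain q2 where q2: "path N A (Suc m * n0) q2 2 1" using path_mult[OF h two one] by blast
  define l where "l = n0 + Suc m * n0"
  define c where "c = (\<lambda>t. if t \<le> n0 then p1 t else q1 (t - n0))"
  define d where "d = (\<lambda>t. if t \<le> n0 then p2 t else q2 (t - n0))"
  have pc: "path N A l c 1 1" unfolding l_def c_def by (rule path_append[OF p1 q1])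
  have pd: "path N A l d 1 1" unfolding l_def d_def by (rule path_append[OF p2 q2])
  have ml: "Suc m * 1 \<le> Suc m * n0" using n0(1) by (intro mult_le_mono2) simp
  have l: "l > 0" "m \<le> l" unfolding l_def using n0(1) ml by simp_all
  have o0: "n0 < l" "c n0 \<noteq> d n0" unfolding l_def c_def d_def using p1 p2 n0(1) by (auto simp: path_def)
  show ?thesis by (rule construction0[OF pc pd l o0])
qed

lemma sh_Sigma: "x \<in> Sigma_A N A \<Longrightarrow> sh x k \<in> Sigma_A N A"
  unfolding Sigma_A_def sh_def by auto

lemma var_upper:
  assumes "\<omega> \<in> Sigma_A N A" "\<omega>' \<in> Sigma_A N A" "\<forall>k<m. \<omega> k = \<omega>' k"
  shows "ereal (cmod (\<phi> \<omega> - \<phi> \<omega>')) \<le> var N A m \<phi>"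
  unfolding var_def
  by (rule SUP_upper2[of "(\<omega>, \<omega>')"]) (use assms in auto)

lemma var_real:
  assumes "\<omega> \<in> Sigma_A N A" "\<omega>' \<in> Sigma_A N A" "\<forall>k<m. \<omega> k = \<omega>' k" "var N A m \<phi> \<noteq> \<infinity>"
  shows "cmod (\<phi> \<omega> - \<phi> \<omega>') \<le> real_of_ereal (var N A m \<phi>)"
proof -
  have le: "ereal (cmod (\<phi> \<omega> - \<phi> \<omega>')) \<le> var N A m \<phi>" by (rule var_upper[OF assms(1-3)])
  then show ?thesis using assms(4) by (cases "var N A m \<phi>") auto
qed

lemma test_cohom:
  assumes T: "test N A M n x y \<pi>" and v: "var N A M \<phi>0 = 0"
    and coh: "\<forall>\<omega>\<in>Sigma_A N A. \<phi> \<omega> - \<phi>0 \<omega> = \<psi> (shift \<omega>) - \<psi> \<omega>"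
  shows "Dsum n x y \<phi> = 0"
proof -
  have per_sum: "(\<Sum>k<n. \<phi> (sh z k)) = (\<Sum>k<n. \<phi>0 (sh z k))"
    if zS: "z \<in> Sigma_A N A" and zp: "\<forall>i. z (i+n) = z i" for z
  proof -
    have "(\<Sum>k<n. \<phi> (sh z k)) = (\<Sum>k<n. \<phi>0 (sh z k) + (\<psi> (sh z (Suc k)) - \<psi> (sh z k)))"
    proof (rule sum.cong[OF refl])
      fix k
      have "shift (sh z k) = sh z (Suc k)" unfolding shift_def sh_def by simp
      then show "\<phi> (sh z k) = \<phi>0 (sh z k) + (\<psi> (sh z (Suc k)) - \<psi> (sh z k))"
        using coh sh_Sigma[OF zS, of k] by (metis add_diff_cancel_left' diff_add_cancel)
    qed
    also have "\<dots> = (\<Sum>k<n. \<phi>0 (sh z k)) + (\<psi> (sh z n) - \<psi> (sh z 0))"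
      by (simp add: sum.distrib sum_lessThan_telescope[of "\<lambda>k. \<psi> (sh z k)" n])
    also have "sh z n = sh z 0" unfolding sh_def using zp by (simp add: add.commute)
    finally show ?thesis by simp
  qed
  have xS: "x \<in> Sigma_A N A" and yS: "y \<in> Sigma_A N A" and bij: "bij_betw \<pi> {..<n} {..<n}"
    using T unfolding test_def by auto
  have eq0: "\<phi>0 (sh x k) = \<phi>0 (sh y (\<pi> k))" if k: "k < n" for k
  proof -
    have "\<forall>j<M. sh x k j = sh y (\<pi> k) j" using T k unfolding test_def sh_def by auto
    then have "ereal (cmod (\<phi>0 (sh x k) - \<phi>0 (sh y (\<pi> k)))) \<le> 0"
      using var_upper[OF sh_Sigma[OF xS] sh_Sigma[OF yS], where m=M and \<phi>=\<phi>0] v by metis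
    then show ?thesis by simp
  qed
  have "(\<Sum>k<n. \<phi>0 (sh x k)) = (\<Sum>k<n. \<phi>0 (sh y (\<pi> k)))" using eq0 by (intro sum.cong) auto
  also have "\<dots> = (\<Sum>k<n. \<phi>0 (sh y k))" using sum.reindex_bij_betw[OF bij, of "\<lambda>k. \<phi>0 (sh y k)"] by simp
  finally show ?thesis unfolding Dsum_def using per_sum[OF xS] per_sum[OF yS] T unfolding test_def by simp
qed



lemma pow_small:
  fixes a \<theta> :: real
  assumes a: "a \<ge> 0" and k: "k > 0" and lt: "a powr (1 / real k) < \<theta>"
  shows "a < \<theta> ^ k"
proof (cases "a = 0")
  case True
  then have "\<theta> > 0" using lt by simp
  then show ?thesis using True by simp
next
  case False
  then have ap: "a > 0" using a by simp
  define b where "b = a powr (1 / real k)"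
  have bp: "b > 0" unfolding b_def using ap by simp
  have "b ^ k = b powr real k" using powr_realpow[OF bp] by simp
  also have "\<dots> = a powr (1 / real k * real k)" unfolding b_def by (simp add: powr_powr)
  also have "\<dots> = a" using k ap by simp
  finally have "b ^ k = a" .
  moreover have "b ^ k < \<theta> ^ k" using lt bp k unfolding b_def[symmetric] by (intro power_strict_mono) auto
  ultimately show ?thesis by simp
qed

lemma V_bounded:
  assumes f: "f \<in> Vspace N A"
  shows "\<exists>B. \<forall>\<omega>\<in>Sigma_A N A. cmod (f \<omega>) \<le> B"
proof -
  from f have "\<forall>\<^sub>F m in sequentially. var N A m f \<noteq> \<infinity>" unfolding Vspace_def by blast
  then obtain K where K: "var N A K f \<noteq> \<infinity>" unfolding eventually_sequentially by blast
  define Pref where "Pref = (\<lambda>\<omega>. map \<omega> [0..<K]) ` Sigma_A N A"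
  have "Pref \<subseteq> {xs. set xs \<subseteq> {1..N} \<and> length xs = K}"
    unfolding Pref_def Sigma_A_def by auto
  then have fin: "finite Pref" by (rule finite_subset) (rule finite_lists_length_eq, simp)
  define rep where "rep = (\<lambda>p. SOME \<omega>. \<omega> \<in> Sigma_A N A \<and> map \<omega> [0..<K] = p)"
  define B where "B = (\<Sum>p\<in>Pref. cmod (f (rep p))) + real_of_ereal (var N A K f)"
  have "cmod (f \<omega>) \<le> B" if w: "\<omega> \<in> Sigma_A N A" for \<omega>
  proof -
    define p where "p = map \<omega> [0..<K]"
    have pP: "p \<in> Pref" unfolding p_def Pref_def using w by blast
    have "\<exists>\<omega>'. \<omega>' \<in> Sigma_A N A \<and> map \<omega>' [0..<K] = p" using w p_def by blast
    then have r: "rep p \<in> Sigma_A N A \<and> map (rep p) [0..<K] = p"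
      unfolding rep_def by (rule someI_ex)
    then have ag: "\<forall>k<K. \<omega> k = rep p k" unfolding p_def by (auto simp: map_eq_conv)
    have d: "cmod (f \<omega> - f (rep p)) \<le> real_of_ereal (var N A K f)"
      by (rule var_real[OF w _ ag K]) (use r in blast)
    have s: "cmod (f (rep p)) \<le> (\<Sum>p\<in>Pref. cmod (f (rep p)))"
      by (rule member_le_sum[OF pP _ fin]) simp
    have "cmod (f \<omega>) \<le> cmod (f (rep p)) + cmod (f \<omega> - f (rep p))"
      by (metis add.commute diff_add_cancel norm_triangle_ineq)
    then show ?thesis using d s unfolding B_def by linarith
  qed
  then show ?thesis by blast
qed

lemma first_diff_agree:
  assumes "\<omega> \<noteq> \<omega>'"
  shows "\<forall>i<first_diff \<omega> \<omega>'. \<omega> i = \<omega>' i"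
  unfolding first_diff_def using not_less_Least by blast

lemma d_theta_eq: "\<omega> \<noteq> \<omega>' \<Longrightarrow> d_theta \<theta> \<omega> \<omega>' = \<theta> ^ first_diff \<omega> \<omega>'"
  unfolding d_theta_def by simp

lemma V_lip:
  assumes f: "f \<in> Vspace N A" and th: "0 < \<theta>" "\<theta> < 1"
  shows "\<exists>L. \<forall>\<omega>\<in>Sigma_A N A. \<forall>\<omega>'\<in>Sigma_A N A. \<omega> \<noteq> \<omega>' \<longrightarrow> cmod (f \<omega> - f \<omega>') / d_theta \<theta> \<omega> \<omega>' \<le> L"
proof -
  obtain B where B: "\<forall>\<omega>\<in>Sigma_A N A. cmod (f \<omega>) \<le> B" using V_bounded[OF f] by blast
  have e1: "\<forall>\<^sub>F m in sequentially. var N A m f \<noteq> \<infinity>" using f unfolding Vspace_def by blast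
  have lim: "(\<lambda>m. real_of_ereal (var N A m f) powr (1 / real m)) \<longlonglongrightarrow> 0" using f unfolding Vspace_def by blast
  have e2: "\<forall>\<^sub>F m in sequentially. real_of_ereal (var N A m f) powr (1 / real m) < \<theta>"
    using order_tendstoD(2)[OF lim th(1)] .
  have "\<forall>\<^sub>F m in sequentially. var N A m f \<noteq> \<infinity> \<and> real_of_ereal (var N A m f) powr (1 / real m) < \<theta> \<and> m \<ge> 1"
    using e1 e2 eventually_ge_at_top[of 1] by eventually_elim auto
  then obtain K0 where K0: "\<forall>m\<ge>K0. var N A m f \<noteq> \<infinity> \<and> real_of_ereal (var N A m f) powr (1 / real m) < \<theta> \<and> m \<ge> 1"
    unfolding eventually_sequentially by blast
  define L where "L = max 1 (2 * B / \<theta> ^ K0)"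
  have "cmod (f \<omega> - f \<omega>') / d_theta \<theta> \<omega> \<omega>' \<le> L"
    if w: "\<omega> \<in> Sigma_A N A" "\<omega>' \<in> Sigma_A N A" "\<omega> \<noteq> \<omega>'" for \<omega> \<omega>'
  proof -
    define k where "k = first_diff \<omega> \<omega>'"
    have ag: "\<forall>i<k. \<omega> i = \<omega>' i" unfolding k_def using first_diff_agree[OF w(3)] .
    have d: "d_theta \<theta> \<omega> \<omega>' = \<theta> ^ k" unfolding k_def using d_theta_eq[OF w(3)] .
    have tk: "\<theta> ^ k > 0" using th by simp
    show ?thesis
    proof (cases "k \<ge> K0")
      case True
      then have kk: "var N A k f \<noteq> \<infinity>" "real_of_ereal (var N A k f) powr (1 / real k) < \<theta>" "k \<ge> 1"
        using K0 by auto
      have c: "cmod (f \<omega> - f \<omega>') \<le> real_of_ereal (var N A k f)" by (rule var_real[OF w(1,2) ag kk(1)])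
      have "real_of_ereal (var N A k f) < \<theta> ^ k"
        by (rule pow_small[OF _ _ kk(2)]) (use c kk(3) in \<open>auto intro: order_trans[OF norm_ge_zero]\<close>)
      then have "cmod (f \<omega> - f \<omega>') / \<theta> ^ k \<le> 1" using c tk by simp
      then show ?thesis unfolding d L_def by linarith
    next
      case False
      have c: "cmod (f \<omega> - f \<omega>') \<le> 2 * B"
      proof -
        have "cmod (f \<omega>) \<le> B" "cmod (f \<omega>') \<le> B" using B w by auto
        then show ?thesis using norm_triangle_ineq4[of "f \<omega>" "f \<omega>'"] by linarith
      qed
      have tK: "\<theta> ^ K0 \<le> \<theta> ^ k" using False th by (intro power_decreasing) auto
      have tK0: "\<theta> ^ K0 > 0" using th by simp
      have "cmod (f \<omega> - f \<omega>') / \<theta> ^ k \<le> 2 * B / \<theta> ^ k" using c tk by (simp add: divide_right_mono)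
      also have "\<dots> \<le> 2 * B / \<theta> ^ K0"
      proof (rule divide_left_mono)
        show "0 \<le> 2 * B" using c norm_ge_zero[of "f \<omega> - f \<omega>'"] by linarith
      qed (use tK tK0 in auto)
      finally show ?thesis unfolding d L_def by linarith
    qed
  qed
  then show ?thesis by blast
qed



lemma lip_set_eq: "{(\<omega>, \<omega>'). \<omega> \<in> Sigma_A N A \<and> \<omega>' \<in> Sigma_A N A \<and> \<omega> \<noteq> \<omega>'} = {p. fst p \<in> Sigma_A N A \<and> snd p \<in> Sigma_A N A \<and> fst p \<noteq> snd p}"
  by auto

lemma norm_ge_gen:
  assumes hb: "\<forall>\<omega>\<in>Sigma_A N A. cmod (h \<omega>) \<le> B"
    and hl: "\<forall>\<omega>\<in>Sigma_A N A. \<forall>\<omega>'\<in>Sigma_A N A. \<omega> \<noteq> \<omega>' \<longrightarrow> cmod (h \<omega> - h \<omega>') / d_theta \<theta> \<omega> \<omega>' \<le> L"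
    and two: "a \<in> Sigma_A N A" "b \<in> Sigma_A N A" "a \<noteq> b"
    and th: "0 < \<theta>" "\<theta> < 1"
    and w: "\<omega> \<in> Sigma_A N A" "\<omega>' \<in> Sigma_A N A"
  shows "cmod (h \<omega> - h \<omega>') \<le> theta_norm N A \<theta> h"
proof -
  define P where "P = {(\<omega>, \<omega>'). \<omega> \<in> Sigma_A N A \<and> \<omega>' \<in> Sigma_A N A \<and> \<omega> \<noteq> \<omega>'}"
  define q where "q = (\<lambda>p. cmod (h (fst p) - h (snd p)) / d_theta \<theta> (fst p) (snd p))"
  have lipd: "lip N A \<theta> h = (SUP p\<in>P. q p)" unfolding lip_def P_def q_def by simp
  have bP: "bdd_above (q ` P)" using hl unfolding P_def q_def by (intro bdd_aboveI2[where M=L]) auto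
  have lip_ge: "q p \<le> lip N A \<theta> h" if "p \<in> P" for p unfolding lipd by (rule cSUP_upper[OF that bP])
  have qnn: "q p \<ge> 0" for p unfolding q_def d_theta_def using th by auto
  have lip0: "lip N A \<theta> h \<ge> 0" using lip_ge[of "(a,b)"] qnn[of "(a,b)"] two unfolding P_def by auto
  have bS: "bdd_above ((\<lambda>\<omega>. cmod (h \<omega>)) ` Sigma_A N A)" using hb by (intro bdd_aboveI2[where M=B]) auto
  have sup0: "sup_norm N A h \<ge> 0"
    unfolding sup_norm_def using cSUP_upper[OF two(1) bS] norm_ge_zero[of "h a"] by linarith
  show ?thesis
  proof (cases "\<omega> = \<omega>'")
    case True then show ?thesis using lip0 sup0 unfolding theta_norm_def by simp
  next
    case False
    have d: "d_theta \<theta> \<omega> \<omega>' = \<theta> ^ first_diff \<omega> \<omega>'" using d_theta_eq[OF False] .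
    have d1: "0 < \<theta> ^ first_diff \<omega> \<omega>'" "\<theta> ^ first_diff \<omega> \<omega>' \<le> 1" using th by (auto intro: power_le_one)
    have "cmod (h \<omega> - h \<omega>') * 1 \<le> cmod (h \<omega> - h \<omega>') / \<theta> ^ first_diff \<omega> \<omega>'"
      using d1 by (simp add: le_divide_eq mult_left_le)
    then have "cmod (h \<omega> - h \<omega>') \<le> q (\<omega>, \<omega>')" unfolding q_def using d by simp
    also have "\<dots> \<le> lip N A \<theta> h" using lip_ge False w unfolding P_def by auto
    finally show ?thesis using sup0 unfolding theta_norm_def by linarith
  qed
qed

lemma diff_bounds:
  assumes "\<psi> \<in> Vspace N A" "\<phi> \<in> Vspace N A" "0 < \<theta>" "\<theta> < 1"
  shows "\<exists>B. \<forall>\<omega>\<in>Sigma_A N A. cmod ((\<psi> - \<phi>) \<omega>) \<le> B"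
    and "\<exists>L. \<forall>\<omega>\<in>Sigma_A N A. \<forall>\<omega>'\<in>Sigma_A N A. \<omega> \<noteq> \<omega>' \<longrightarrow> cmod ((\<psi> - \<phi>) \<omega> - (\<psi> - \<phi>) \<omega>') / d_theta \<theta> \<omega> \<omega>' \<le> L"
proof -
  obtain B1 B2 where B: "\<forall>\<omega>\<in>Sigma_A N A. cmod (\<psi> \<omega>) \<le> B1" "\<forall>\<omega>\<in>Sigma_A N A. cmod (\<phi> \<omega>) \<le> B2"
    using V_bounded[OF assms(1)] V_bounded[OF assms(2)] by metis
  have "cmod ((\<psi> - \<phi>) \<omega>) \<le> B1 + B2" if "\<omega> \<in> Sigma_A N A" for \<omega>
  proof -
    have "cmod (\<psi> \<omega>) \<le> B1" "cmod (\<phi> \<omega>) \<le> B2" using B that by auto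
    moreover have "cmod ((\<psi> - \<phi>) \<omega>) = cmod (\<psi> \<omega> - \<phi> \<omega>)" by simp
    ultimately show ?thesis using norm_triangle_ineq4[of "\<psi> \<omega>" "\<phi> \<omega>"] by linarith
  qed
  then show "\<exists>B. \<forall>\<omega>\<in>Sigma_A N A. cmod ((\<psi> - \<phi>) \<omega>) \<le> B" by blast
  obtain L1 L2 where L: "\<forall>\<omega>\<in>Sigma_A N A. \<forall>\<omega>'\<in>Sigma_A N A. \<omega> \<noteq> \<omega>' \<longrightarrow> cmod (\<psi> \<omega> - \<psi> \<omega>') / d_theta \<theta> \<omega> \<omega>' \<le> L1"
    "\<forall>\<omega>\<in>Sigma_A N A. \<forall>\<omega>'\<in>Sigma_A N A. \<omega> \<noteq> \<omega>' \<longrightarrow> cmod (\<phi> \<omega> - \<phi> \<omega>') / d_theta \<theta> \<omega> \<omega>' \<le> L2"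
    using V_lip[OF assms(1,3,4)] V_lip[OF assms(2,3,4)] by metis
  have "cmod ((\<psi> - \<phi>) \<omega> - (\<psi> - \<phi>) \<omega>') / d_theta \<theta> \<omega> \<omega>' \<le> L1 + L2"
    if w: "\<omega> \<in> Sigma_A N A" "\<omega>' \<in> Sigma_A N A" "\<omega> \<noteq> \<omega>'" for \<omega> \<omega>'
  proof -
    have dp: "d_theta \<theta> \<omega> \<omega>' > 0" using d_theta_eq[OF w(3)] assms(3) by simp
    have "cmod ((\<psi> - \<phi>) \<omega> - (\<psi> - \<phi>) \<omega>') \<le> cmod (\<psi> \<omega> - \<psi> \<omega>') + cmod (\<phi> \<omega> - \<phi> \<omega>')"
    proof -
      have "(\<psi> - \<phi>) \<omega> - (\<psi> - \<phi>) \<omega>' = (\<psi> \<omega> - \<psi> \<omega>') - (\<phi> \<omega> - \<phi> \<omega>')" by simp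
      then show ?thesis using norm_triangle_ineq4[of "\<psi> \<omega> - \<psi> \<omega>'" "\<phi> \<omega> - \<phi> \<omega>'"] by (simp only:)
    qed
    then have "cmod ((\<psi> - \<phi>) \<omega> - (\<psi> - \<phi>) \<omega>') / d_theta \<theta> \<omega> \<omega>' \<le> cmod (\<psi> \<omega> - \<psi> \<omega>') / d_theta \<theta> \<omega> \<omega>' + cmod (\<phi> \<omega> - \<phi> \<omega>') / d_theta \<theta> \<omega> \<omega>'"
      using dp by (metis add_divide_distrib divide_right_mono less_le)
    moreover have "cmod (\<psi> \<omega> - \<psi> \<omega>') / d_theta \<theta> \<omega> \<omega>' \<le> L1" "cmod (\<phi> \<omega> - \<phi> \<omega>') / d_theta \<theta> \<omega> \<omega>' \<le> L2"
      using L w by auto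
    ultimately show ?thesis by linarith
  qed
  then show "\<exists>L. \<forall>\<omega>\<in>Sigma_A N A. \<forall>\<omega>'\<in>Sigma_A N A. \<omega> \<noteq> \<omega>' \<longrightarrow> cmod ((\<psi> - \<phi>) \<omega> - (\<psi> - \<phi>) \<omega>') / d_theta \<theta> \<omega> \<omega>' \<le> L" by blast
qed

lemma norm_ge_V:
  assumes "\<psi> \<in> Vspace N A" "\<phi> \<in> Vspace N A" "0 < \<theta>" "\<theta> < 1"
    and two: "a \<in> Sigma_A N A" "b \<in> Sigma_A N A" "a \<noteq> b"
    and w: "\<omega> \<in> Sigma_A N A" "\<omega>' \<in> Sigma_A N A"
  shows "cmod ((\<psi> - \<phi>) \<omega> - (\<psi> - \<phi>) \<omega>') \<le> theta_norm N A \<theta> (\<psi> - \<phi>)"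
proof -
  obtain B L where "\<forall>\<omega>\<in>Sigma_A N A. cmod ((\<psi> - \<phi>) \<omega>) \<le> B"
    "\<forall>\<omega>\<in>Sigma_A N A. \<forall>\<omega>'\<in>Sigma_A N A. \<omega> \<noteq> \<omega>' \<longrightarrow> cmod ((\<psi> - \<phi>) \<omega> - (\<psi> - \<phi>) \<omega>') / d_theta \<theta> \<omega> \<omega>' \<le> L"
    using diff_bounds[OF assms(1-4)] by blast
  then show ?thesis by (rule norm_ge_gen[OF _ _ two assms(3,4) w])
qed



definition Wset :: "nat \<Rightarrow> (nat \<Rightarrow> nat \<Rightarrow> nat) \<Rightarrow> nat \<Rightarrow> (seq \<Rightarrow> complex) set" where
  "Wset N A m = {\<phi> \<in> Vspace N A. \<exists>n x y \<pi>. test N A m n x y \<pi> \<and> Dsum n x y \<phi> \<noteq> 0}"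

lemma two_points:
  assumes "N \<ge> 2" "zero_one_matrix N A" "aperiodic N A"
  shows "\<exists>a b. a \<in> Sigma_A N A \<and> b \<in> Sigma_A N A \<and> a \<noteq> b"
proof -
  obtain n x y \<pi> g where t: "test N A 0 n x y \<pi>" and D: "Dsum n x y g \<noteq> 0"
    using construction[OF assms, of 0] by blast
  have "x \<noteq> y" using D unfolding Dsum_def by auto
  then show ?thesis using t unfolding test_def by blast
qed

lemma Dsum_diff: "Dsum n x y \<psi> = Dsum n x y \<phi> + (\<Sum>k<n. (\<psi> - \<phi>) (sh x k) - (\<psi> - \<phi>) (sh y k))"
  unfolding Dsum_def by (simp only: fun_diff_def sum_subtractf) (simp add: algebra_simps)

lemma W_open:
  assumes "N \<ge> 2" "zero_one_matrix N A" "aperiodic N A"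
  shows "V_open N A (Wset N A m)"
  unfolding V_open_def
proof (intro conjI ballI)
  show "Wset N A m \<subseteq> Vspace N A" unfolding Wset_def by auto
  fix \<phi> assume "\<phi> \<in> Wset N A m"
  then obtain n x y \<pi> where \<phi>V: "\<phi> \<in> Vspace N A" and t: "test N A m n x y \<pi>" and D: "Dsum n x y \<phi> \<noteq> 0"
    unfolding Wset_def by blast
  obtain a b where two: "a \<in> Sigma_A N A" "b \<in> Sigma_A N A" "a \<noteq> b" using two_points[OF assms] by blast
  have n: "n > 0" and xS: "x \<in> Sigma_A N A" and yS: "y \<in> Sigma_A N A" using t unfolding test_def by auto
  define \<delta> where "\<delta> = cmod (Dsum n x y \<phi>)"
  have \<delta>: "\<delta> > 0" unfolding \<delta>_def using D by simp
  define \<epsilon> where "\<epsilon> = \<delta> / (2 * real n)"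
  have \<epsilon>: "\<epsilon> > 0" unfolding \<epsilon>_def using \<delta> n by simp
  have "{\<psi> \<in> Vspace N A. \<forall>\<theta>\<in>{1/2}. theta_norm N A \<theta> (\<psi> - \<phi>) < \<epsilon>} \<subseteq> Wset N A m"
  proof
    fix \<psi> assume "\<psi> \<in> {\<psi> \<in> Vspace N A. \<forall>\<theta>\<in>{1/2}. theta_norm N A \<theta> (\<psi> - \<phi>) < \<epsilon>}"
    then have \<psi>V: "\<psi> \<in> Vspace N A" and tn: "theta_norm N A (1/2) (\<psi> - \<phi>) < \<epsilon>" by auto
    have tm: "cmod ((\<psi> - \<phi>) (sh x k) - (\<psi> - \<phi>) (sh y k)) \<le> theta_norm N A (1/2) (\<psi> - \<phi>)" for k
      by (rule norm_ge_V[OF \<psi>V \<phi>V _ _ two sh_Sigma[OF xS] sh_Sigma[OF yS]]) auto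
    have "cmod (\<Sum>k<n. (\<psi> - \<phi>) (sh x k) - (\<psi> - \<phi>) (sh y k)) \<le> (\<Sum>k<n. cmod ((\<psi> - \<phi>) (sh x k) - (\<psi> - \<phi>) (sh y k)))"
      by (rule norm_sum)
    also have "\<dots> \<le> (\<Sum>k<n. theta_norm N A (1/2) (\<psi> - \<phi>))" by (rule sum_mono) (rule tm)
    also have "\<dots> = real n * theta_norm N A (1/2) (\<psi> - \<phi>)" by simp
    also have "\<dots> \<le> real n * \<epsilon>" using tn n by simp
    also have "\<dots> = \<delta> / 2" unfolding \<epsilon>_def using n by simp
    finally have S: "cmod (\<Sum>k<n. (\<psi> - \<phi>) (sh x k) - (\<psi> - \<phi>) (sh y k)) \<le> \<delta> / 2" .
    define E where "E = (\<Sum>k<n. (\<psi> - \<phi>) (sh x k) - (\<psi> - \<phi>) (sh y k))"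
    have "Dsum n x y \<phi> = Dsum n x y \<psi> - E" unfolding E_def using Dsum_diff[of n x y \<psi> \<phi>]
      by (metis add_diff_cancel_right')
    then have "\<delta> \<le> cmod (Dsum n x y \<psi>) + cmod E" unfolding \<delta>_def
      by (simp only:) (rule norm_triangle_ineq4)
    then have "\<delta> \<le> cmod (Dsum n x y \<psi>) + cmod (\<Sum>k<n. (\<psi> - \<phi>) (sh x k) - (\<psi> - \<phi>) (sh y k))"
      unfolding E_def .
    then have "cmod (Dsum n x y \<psi>) > 0" using S \<delta> by linarith
    then show "\<psi> \<in> Wset N A m" unfolding Wset_def using \<psi>V t by auto
  qed
  then show "\<exists>\<Theta> \<epsilon>. finite \<Theta> \<and> \<Theta> \<subseteq> {0<..<1} \<and> \<epsilon> > 0 \<and>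
        {\<psi> \<in> Vspace N A. \<forall>\<theta>\<in>\<Theta>. theta_norm N A \<theta> (\<psi> - \<phi>) < \<epsilon>} \<subseteq> Wset N A m"
    using \<epsilon> by (intro exI[of _ "{1/2}"] exI[of _ \<epsilon>]) auto
qed



lemma add_lc_V:
  assumes \<phi>: "\<phi> \<in> Vspace N A" and g0: "\<forall>\<omega>. \<omega> \<notin> Sigma_A N A \<longrightarrow> g \<omega> = 0"
    and gK: "\<forall>\<omega>\<in>Sigma_A N A. \<forall>\<omega>'\<in>Sigma_A N A. (\<forall>i<K. \<omega> i = \<omega>' i) \<longrightarrow> g \<omega> = g \<omega>'"
  shows "(\<lambda>\<omega>. \<phi> \<omega> + c * g \<omega>) \<in> Vspace N A"
proof -
  define \<psi> where "\<psi> = (\<lambda>\<omega>. \<phi> \<omega> + c * g \<omega>)"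
  have veq: "var N A k \<psi> = var N A k \<phi>" if k: "k \<ge> K" for k
    unfolding var_def
  proof (rule SUP_cong[OF refl])
    fix p assume "p \<in> {(\<omega>, \<omega>'). \<omega> \<in> Sigma_A N A \<and> \<omega>' \<in> Sigma_A N A \<and> (\<forall>k'<k. \<omega> k' = \<omega>' k')}"
    then obtain a b where p: "p = (a, b)" "a \<in> Sigma_A N A" "b \<in> Sigma_A N A" "\<forall>k'<k. a k' = b k'" by auto
    have "\<forall>i<K. a i = b i" using p(4) k by auto
    then have "g a = g b" using gK p(2,3) by blast
    then have "\<psi> a - \<psi> b = \<phi> a - \<phi> b" unfolding \<psi>_def by simp
    then show "ereal (cmod (\<psi> (fst p) - \<psi> (snd p))) = ereal (cmod (\<phi> (fst p) - \<phi> (snd p)))" using p by simp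
  qed
  have ev: "\<forall>\<^sub>F m in sequentially. var N A m \<psi> = var N A m \<phi>"
    using eventually_ge_at_top[of K] by eventually_elim (rule veq)
  have "\<forall>\<omega>. \<omega> \<notin> Sigma_A N A \<longrightarrow> \<phi> \<omega> = 0" using \<phi> unfolding Vspace_def by blast
  then have c1: "\<forall>\<omega>. \<omega> \<notin> Sigma_A N A \<longrightarrow> \<psi> \<omega> = 0" using g0 unfolding \<psi>_def by simp
  have "\<forall>\<^sub>F m in sequentially. var N A m \<phi> \<noteq> \<infinity>" using \<phi> unfolding Vspace_def by blast
  then have c2: "\<forall>\<^sub>F m in sequentially. var N A m \<psi> \<noteq> \<infinity>" using ev by eventually_elim simp
  have lim: "(\<lambda>m. real_of_ereal (var N A m \<phi>) powr (1 / real m)) \<longlonglongrightarrow> 0" using \<phi> unfolding Vspace_def by blast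
  have ev2: "\<forall>\<^sub>F m in sequentially. real_of_ereal (var N A m \<phi>) powr (1 / real m) = real_of_ereal (var N A m \<psi>) powr (1 / real m)"
    using ev by eventually_elim simp
  have c3: "(\<lambda>m. real_of_ereal (var N A m \<psi>) powr (1 / real m)) \<longlonglongrightarrow> 0"
    by (rule Lim_transform_eventually[OF lim ev2])
  show ?thesis unfolding \<psi>_def[symmetric] Vspace_def using c1 c2 c3 by (intro CollectI conjI)
qed

lemma theta_small:
  assumes \<eta>: "\<eta> > 0" and g01: "\<forall>\<omega>. g \<omega> \<in> {0,1}"
    and gK: "\<forall>\<omega>\<in>Sigma_A N A. \<forall>\<omega>'\<in>Sigma_A N A. (\<forall>i<K. \<omega> i = \<omega>' i) \<longrightarrow> g \<omega> = g \<omega>'"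
    and two: "a \<in> Sigma_A N A" "b \<in> Sigma_A N A" "a \<noteq> b"
    and th: "0 < \<theta>" "\<theta> < 1"
  shows "theta_norm N A \<theta> (\<lambda>\<omega>. complex_of_real \<eta> * g \<omega>) \<le> \<eta> + \<eta> / \<theta> ^ K"
proof -
  define h where "h = (\<lambda>\<omega>. complex_of_real \<eta> * g \<omega>)"
  have hv: "cmod (h \<omega>) \<le> \<eta>" for \<omega>
  proof -
    have "g \<omega> = 0 \<or> g \<omega> = 1" using g01 by blast
    then show ?thesis using \<eta> unfolding h_def by (elim disjE) simp_all
  qed
  have hd: "cmod (h \<omega> - h \<omega>') \<le> \<eta>" for \<omega> \<omega>'
  proof -
    have "g \<omega> = 0 \<or> g \<omega> = 1" "g \<omega>' = 0 \<or> g \<omega>' = 1" using g01 by blast+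
    then show ?thesis using \<eta> unfolding h_def by (elim disjE) simp_all
  qed
  have s: "sup_norm N A h \<le> \<eta>" unfolding sup_norm_def
  proof (rule cSUP_least)
    show "Sigma_A N A \<noteq> {}" using two by blast
  qed (rule hv)
  have tK: "\<theta> ^ K > 0" using th by simp
  have l: "lip N A \<theta> h \<le> \<eta> / \<theta> ^ K" unfolding lip_def
  proof (rule cSUP_least)
    show "{(\<omega>, \<omega>'). \<omega> \<in> Sigma_A N A \<and> \<omega>' \<in> Sigma_A N A \<and> \<omega> \<noteq> \<omega>'} \<noteq> {}" using two by auto
  next
    fix p assume "p \<in> {(\<omega>, \<omega>'). \<omega> \<in> Sigma_A N A \<and> \<omega>' \<in> Sigma_A N A \<and> \<omega> \<noteq> \<omega>'}"
    then obtain \<omega> \<omega>' where p: "p = (\<omega>, \<omega>')" "\<omega> \<in> Sigma_A N A" "\<omega>' \<in> Sigma_A N A" "\<omega> \<noteq> \<omega>'" by auto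
    define k where "k = first_diff \<omega> \<omega>'"
    have ag: "\<forall>i<k. \<omega> i = \<omega>' i" unfolding k_def using first_diff_agree[OF p(4)] .
    have d: "d_theta \<theta> \<omega> \<omega>' = \<theta> ^ k" unfolding k_def using d_theta_eq[OF p(4)] .
    have tk: "\<theta> ^ k > 0" using th by simp
    have "cmod (h \<omega> - h \<omega>') / \<theta> ^ k \<le> \<eta> / \<theta> ^ K"
    proof (cases "K \<le> k")
      case True
      then have "\<forall>i<K. \<omega> i = \<omega>' i" using ag by auto
      then have "g \<omega> = g \<omega>'" using gK p(2,3) by blast
      then have "cmod (h \<omega> - h \<omega>') = 0" unfolding h_def by simp
      then show ?thesis using \<eta> tK by simp
    next
      case False
      have "\<theta> ^ K \<le> \<theta> ^ k" using False th by (intro power_decreasing) auto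
      have "cmod (h \<omega> - h \<omega>') / \<theta> ^ k \<le> \<eta> / \<theta> ^ k" using hd tk by (simp add: divide_right_mono)
      also have "\<dots> \<le> \<eta> / \<theta> ^ K" using \<open>\<theta> ^ K \<le> \<theta> ^ k\<close> tK \<eta> by (intro divide_left_mono) auto
      finally show ?thesis .
    qed
    then show "cmod (h (fst p) - h (snd p)) / d_theta \<theta> (fst p) (snd p) \<le> \<eta> / \<theta> ^ K" using p d by simp
  qed
  show ?thesis using s l unfolding theta_norm_def h_def by linarith
qed

lemma Dsum_lin: "Dsum n x y (\<lambda>\<omega>. \<phi> \<omega> + c * g \<omega>) = Dsum n x y \<phi> + c * Dsum n x y g"
  unfolding Dsum_def sum.distrib sum_distrib_left[symmetric] by (simp add: algebra_simps)



lemma density: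
  assumes as: "N \<ge> 2" "zero_one_matrix N A" "aperiodic N A"
    and \<phi>: "\<phi> \<in> Vspace N A" and fin: "finite \<Theta>" and Th: "\<Theta> \<subseteq> {0<..<1}" and \<epsilon>: "\<epsilon> > 0"
  shows "\<exists>\<psi>\<in>Wset N A m. \<forall>\<theta>\<in>\<Theta>. theta_norm N A \<theta> (\<psi> - \<phi>) < \<epsilon>"
proof -
  obtain n x y \<pi> g K where t: "test N A m n x y \<pi>" and g01: "\<forall>\<omega>. g \<omega> \<in> {0,1}"
    and g0: "\<forall>\<omega>. \<omega> \<notin> Sigma_A N A \<longrightarrow> g \<omega> = 0"
    and gK: "\<forall>\<omega>\<in>Sigma_A N A. \<forall>\<omega>'\<in>Sigma_A N A. (\<forall>i<K. \<omega> i = \<omega>' i) \<longrightarrow> g \<omega> = g \<omega>'"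
    and Dg: "Dsum n x y g \<noteq> 0"
    using construction[OF as, of m] by blast
  obtain a b where two: "a \<in> Sigma_A N A" "b \<in> Sigma_A N A" "a \<noteq> b" using two_points[OF as] by blast
  define C where "C = 1 + (\<Sum>\<theta>\<in>\<Theta>. 1 + 1 / \<theta> ^ K)"
  have tpos: "\<And>\<theta>. \<theta> \<in> \<Theta> \<Longrightarrow> 0 < \<theta> \<and> \<theta> < 1" using Th by auto
  have termpos: "0 \<le> 1 + 1 / \<theta> ^ K" if "\<theta> \<in> \<Theta>" for \<theta>
  proof -
    have "\<theta> ^ K > 0" using tpos[OF that] by simp
    then have "1 / \<theta> ^ K > 0" by simp
    then show ?thesis by linarith
  qed
  have sumnn: "0 \<le> (\<Sum>\<theta>\<in>\<Theta>. 1 + 1 / \<theta> ^ K)" by (rule sum_nonneg) (rule termpos)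
  have C1: "C \<ge> 1" unfolding C_def using sumnn by linarith
  have Cge: "1 + 1 / \<theta> ^ K \<le> C" if "\<theta> \<in> \<Theta>" for \<theta>
  proof -
    have "1 + 1 / \<theta> ^ K \<le> (\<Sum>\<theta>\<in>\<Theta>. 1 + 1 / \<theta> ^ K)" by (rule member_le_sum[OF that _ fin]) (rule termpos, blast)
    then show ?thesis unfolding C_def by linarith
  qed
  define \<eta>0 where "\<eta>0 = \<epsilon> / (2 * C)"
  have \<eta>0: "\<eta>0 > 0" unfolding \<eta>0_def using \<epsilon> C1 by simp
  have "\<exists>\<eta>. 0 < \<eta> \<and> \<eta> \<le> \<eta>0 \<and> Dsum n x y \<phi> + complex_of_real \<eta> * Dsum n x y g \<noteq> 0"
  proof (rule ccontr)
    assume "\<not> ?thesis"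
    then have H: "\<forall>\<eta>. 0 < \<eta> \<and> \<eta> \<le> \<eta>0 \<longrightarrow> Dsum n x y \<phi> + complex_of_real \<eta> * Dsum n x y g = 0"
      by blast
    have z1: "Dsum n x y \<phi> + complex_of_real \<eta>0 * Dsum n x y g = 0" using H \<eta>0 by simp
    have z2: "Dsum n x y \<phi> + complex_of_real (\<eta>0 / 2) * Dsum n x y g = 0" using H[rule_format, of "\<eta>0/2"] \<eta>0 by simp
    have "complex_of_real \<eta>0 * Dsum n x y g = complex_of_real (\<eta>0 / 2) * Dsum n x y g"
      using z1 z2 by (metis add_left_cancel)
    then have "complex_of_real \<eta>0 = complex_of_real (\<eta>0 / 2)" using Dg by (metis mult_right_cancel)
    then have "\<eta>0 = \<eta>0 / 2" by (metis of_real_eq_iff)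
    then show False using \<eta>0 by simp
  qed
  then obtain \<eta> where \<eta>: "0 < \<eta>" "\<eta> \<le> \<eta>0" and Dn: "Dsum n x y \<phi> + complex_of_real \<eta> * Dsum n x y g \<noteq> 0"
    by blast
  define \<psi> where "\<psi> = (\<lambda>\<omega>. \<phi> \<omega> + complex_of_real \<eta> * g \<omega>)"
  have \<psi>V: "\<psi> \<in> Vspace N A" unfolding \<psi>_def by (rule add_lc_V[OF \<phi> g0 gK])
  have \<psi>W: "\<psi> \<in> Wset N A m" unfolding Wset_def using \<psi>V t Dn Dsum_lin unfolding \<psi>_def by auto
  have diff: "\<psi> - \<phi> = (\<lambda>\<omega>. complex_of_real \<eta> * g \<omega>)" unfolding \<psi>_def by (rule ext) simp
  have "theta_norm N A \<theta> (\<psi> - \<phi>) < \<epsilon>" if th: "\<theta> \<in> \<Theta>" for \<theta>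
  proof -
    have tt: "0 < \<theta>" "\<theta> < 1" using tpos[OF th] by auto
    have "theta_norm N A \<theta> (\<psi> - \<phi>) \<le> \<eta> + \<eta> / \<theta> ^ K"
      unfolding diff by (rule theta_small[OF \<eta>(1) g01 gK two tt])
    also have "\<dots> = \<eta> * (1 + 1 / \<theta> ^ K)" by (simp add: algebra_simps)
    also have "\<dots> \<le> \<eta>0 * C"
      using Cge[OF th] \<eta> termpos[OF th] by (intro mult_mono) auto
    also have "\<dots> = \<epsilon> / 2" unfolding \<eta>0_def using C1 by simp
    also have "\<dots> < \<epsilon>" using \<epsilon> by simp
    finally show ?thesis .
  qed
  then show ?thesis using \<psi>W by blast
qed

lemma V_istop: "istopology (V_open N A)"
  unfolding istopology_def
proof (intro conjI allI impI)
  fix S T assume S: "V_open N A S" and T: "V_open N A T"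
  show "V_open N A (S \<inter> T)" unfolding V_open_def
  proof (intro conjI ballI)
    show "S \<inter> T \<subseteq> Vspace N A" using S unfolding V_open_def by blast
    fix \<phi> assume "\<phi> \<in> S \<inter> T"
    then have "\<phi> \<in> S" "\<phi> \<in> T" by auto
    obtain \<Theta>1 \<epsilon>1 where 1: "finite \<Theta>1" "\<Theta>1 \<subseteq> {0<..<1}" "\<epsilon>1 > 0"
      "{\<psi> \<in> Vspace N A. \<forall>\<theta>\<in>\<Theta>1. theta_norm N A \<theta> (\<psi> - \<phi>) < \<epsilon>1} \<subseteq> S"
      using S \<open>\<phi> \<in> S\<close> unfolding V_open_def by blast
    obtain \<Theta>2 \<epsilon>2 where 2: "finite \<Theta>2" "\<Theta>2 \<subseteq> {0<..<1}" "\<epsilon>2 > 0"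
      "{\<psi> \<in> Vspace N A. \<forall>\<theta>\<in>\<Theta>2. theta_norm N A \<theta> (\<psi> - \<phi>) < \<epsilon>2} \<subseteq> T"
      using T \<open>\<phi> \<in> T\<close> unfolding V_open_def by blast
    have "{\<psi> \<in> Vspace N A. \<forall>\<theta>\<in>\<Theta>1 \<union> \<Theta>2. theta_norm N A \<theta> (\<psi> - \<phi>) < min \<epsilon>1 \<epsilon>2} \<subseteq> S \<inter> T"
      using 1(4) 2(4) by fastforce
    moreover have "finite (\<Theta>1 \<union> \<Theta>2)" "\<Theta>1 \<union> \<Theta>2 \<subseteq> {0<..<1}" "min \<epsilon>1 \<epsilon>2 > 0" using 1 2 by auto
    ultimately show "\<exists>\<Theta> \<epsilon>. finite \<Theta> \<and> \<Theta> \<subseteq> {0<..<1} \<and> \<epsilon> > 0 \<and>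
        {\<psi> \<in> Vspace N A. \<forall>\<theta>\<in>\<Theta>. theta_norm N A \<theta> (\<psi> - \<phi>) < \<epsilon>} \<subseteq> S \<inter> T" by blast
  qed
next
  fix \<K> assume K: "\<forall>K\<in>\<K>. V_open N A K"
  show "V_open N A (\<Union>\<K>)" unfolding V_open_def
  proof (intro conjI ballI)
    show "\<Union>\<K> \<subseteq> Vspace N A" using K unfolding V_open_def by blast
    fix \<phi> assume "\<phi> \<in> \<Union>\<K>"
    then obtain S where S: "S \<in> \<K>" "\<phi> \<in> S" by blast
    have VS: "V_open N A S" using K S(1) by blast
    obtain \<Theta> \<epsilon> where 1: "finite \<Theta>" "\<Theta> \<subseteq> {0<..<1}" "\<epsilon> > 0"
      "{\<psi> \<in> Vspace N A. \<forall>\<theta>\<in>\<Theta>. theta_norm N A \<theta> (\<psi> - \<phi>) < \<epsilon>} \<subseteq> S"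
      using VS S(2) unfolding V_open_def by blast
    have "S \<subseteq> \<Union>\<K>" using S(1) by blast
    then have "{\<psi> \<in> Vspace N A. \<forall>\<theta>\<in>\<Theta>. theta_norm N A \<theta> (\<psi> - \<phi>) < \<epsilon>} \<subseteq> \<Union>\<K>"
      using 1(4) by (rule order_trans[rotated])
    then show "\<exists>\<Theta> \<epsilon>. finite \<Theta> \<and> \<Theta> \<subseteq> {0<..<1} \<and> \<epsilon> > 0 \<and>
        {\<psi> \<in> Vspace N A. \<forall>\<theta>\<in>\<Theta>. theta_norm N A \<theta> (\<psi> - \<phi>) < \<epsilon>} \<subseteq> \<Union>\<K>"
      using 1(1-3) by blast
  qed
qed

lemma openin_V: "openin (V_topology N A) U \<longleftrightarrow> V_open N A U"
  unfolding V_topology_def using V_istop by simp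

lemma topspace_V: "topspace (V_topology N A) = Vspace N A"
proof
  show "topspace (V_topology N A) \<subseteq> Vspace N A"
  proof
    fix \<phi> assume "\<phi> \<in> topspace (V_topology N A)"
    then obtain U where "openin (V_topology N A) U" "\<phi> \<in> U" unfolding topspace_def by blast
    then show "\<phi> \<in> Vspace N A" unfolding openin_V V_open_def by blast
  qed
  have "V_open N A (Vspace N A)" unfolding V_open_def
  proof (intro conjI ballI subset_refl)
    fix \<phi> assume "\<phi> \<in> Vspace N A"
    have "{\<psi> \<in> Vspace N A. \<forall>\<theta>\<in>{}. theta_norm N A \<theta> (\<psi> - \<phi>) < 1} \<subseteq> Vspace N A" by blast
    then show "\<exists>\<Theta> \<epsilon>. finite \<Theta> \<and> \<Theta> \<subseteq> {0<..<1} \<and> \<epsilon> > 0 \<and>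
        {\<psi> \<in> Vspace N A. \<forall>\<theta>\<in>\<Theta>. theta_norm N A \<theta> (\<psi> - \<phi>) < \<epsilon>} \<subseteq> Vspace N A"
      by (intro exI[of _ "{}"] exI[of _ "1::real"]) simp
  qed
  then show "Vspace N A \<subseteq> topspace (V_topology N A)"
    unfolding topspace_def openin_V by blast
qed

theorem theoremB2:
  fixes N :: nat and A :: "nat \<Rightarrow> nat \<Rightarrow> nat"
  assumes "N \<ge> 2" and "zero_one_matrix N A" and "aperiodic N A"
  shows "\<exists>W :: nat \<Rightarrow> (seq \<Rightarrow> complex) set.
           (\<forall>m. openin (V_topology N A) (W m) \<and>
                (V_topology N A) closure_of (W m) = Vspace N A) \<and>
           (\<Inter>m. W m) \<subseteq> Rset N A"
proof (intro exI[of _ "Wset N A"] conjI allI)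
  fix m
  show "openin (V_topology N A) (Wset N A m)" unfolding openin_V by (rule W_open[OF assms])
  show "V_topology N A closure_of Wset N A m = Vspace N A"
  proof
    show "V_topology N A closure_of Wset N A m \<subseteq> Vspace N A"
      unfolding closure_of_def topspace_V by blast
    show "Vspace N A \<subseteq> V_topology N A closure_of Wset N A m"
    proof
      fix \<phi> assume \<phi>: "\<phi> \<in> Vspace N A"
      have "\<exists>y\<in>Wset N A m. y \<in> T" if T: "\<phi> \<in> T" "openin (V_topology N A) T" for T
      proof -
        have "V_open N A T" using T(2) unfolding openin_V .
        then obtain \<Theta> \<epsilon> where 1: "finite \<Theta>" "\<Theta> \<subseteq> {0<..<1}" "\<epsilon> > 0"
          "{\<psi> \<in> Vspace N A. \<forall>\<theta>\<in>\<Theta>. theta_norm N A \<theta> (\<psi> - \<phi>) < \<epsilon>} \<subseteq> T"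
          using T(1) unfolding V_open_def by blast
        obtain \<psi> where \<psi>: "\<psi> \<in> Wset N A m" "\<forall>\<theta>\<in>\<Theta>. theta_norm N A \<theta> (\<psi> - \<phi>) < \<epsilon>"
          using density[OF assms \<phi> 1(1,2,3)] by blast
        have "\<psi> \<in> Vspace N A" using \<psi>(1) unfolding Wset_def by blast
        then have "\<psi> \<in> T" using 1(4) \<psi>(2) by blast
        then show ?thesis using \<psi>(1) by blast
      qed
      then show "\<phi> \<in> V_topology N A closure_of Wset N A m"
        unfolding closure_of_def topspace_V using \<phi> by blast
    qed
  qed
next
  show "(\<Inter>m. Wset N A m) \<subseteq> Rset N A"
  proof
    fix \<phi> assume \<phi>: "\<phi> \<in> (\<Inter>m. Wset N A m)"
    then have \<phi>V: "\<phi> \<in> Vspace N A" unfolding Wset_def by blast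
    have "\<not> cohomologous_to_lc N A \<phi>"
    proof
      assume "cohomologous_to_lc N A \<phi>"
      then obtain \<phi>0 \<psi> M where v: "var N A M \<phi>0 = 0"
        and coh: "\<forall>\<omega>\<in>Sigma_A N A. \<phi> \<omega> - \<phi>0 \<omega> = \<psi> (shift \<omega>) - \<psi> \<omega>"
        unfolding cohomologous_to_lc_def locally_constant_def by blast
      have "\<phi> \<in> Wset N A M" using \<phi> by blast
      then obtain n x y \<pi> where t: "test N A M n x y \<pi>" and D: "Dsum n x y \<phi> \<noteq> 0"
        unfolding Wset_def by blast
      show False using test_cohom[OF t v coh] D by simp
    qed
    then show "\<phi> \<in> Rset N A" unfolding Rset_def using \<phi>V by blast
  qed
qed


end
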